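(* Consider $2$ agents with additive, identical, normalized valuation $v$, and no predictions. Consider the online algorithm that allocates each arriving good $g_t$ to agent 1 if $v(A_1)+v(g_t)\le \varphi-1$, where $A_1$ is agent 1's current bundle and $\varphi=\frac{1+\sqrt5}{2}$, and otherwise allocates $g_t$ to agent 2. This algorithm guarantees that the final allocation is $(\varphi-1)$-EFX.
   Context: Online fair division model: goods $g_1,\dots,g_T$ arrive one per time step; the agents have an identical additive normalized valuation $v$ ($v(g_t)\ge0$, $\sum_{t=1}^T v(g_t)=1$, $v(S)=\sum_{g\in S}v(g)$). When $g_t$ arrives, $v(g_t)$ is revealed and $g_t$ must be irrevocably allocated to one agent. For a bundle $S\ne\emptyset$, let $\bar S=S\setminus\{g\}$ with $g\in\arg\max_{g'\in S}v(S\setminus\{g'\})$, and $\bar\emptyset=\emptyset$. For $a\in[0,1]$, an allocation $(A_1,A_2)$ is $a$-EFX if $v(A_i)\ge a\cdot v(\bar A_j)$ for all $i,j$. *)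

theory Defs
  imports Complex_Main
begin

(* Goods are indexed 0, ..., T-1 in arrival order; v t is the value of good t.
   A bundle is a set of good indices; its value is the additive sum. *)

definition bval :: "(nat \<Rightarrow> real) \<Rightarrow> nat set \<Rightarrow> real" where
  "bval v S = (\<Sum>g\<in>S. v g)"

definition bar_val :: "(nat \<Rightarrow> real) \<Rightarrow> nat set \<Rightarrow> real" where
  "bar_val v S = (if S = {} then 0 else Max ((\<lambda>g. bval v (S - {g})) ` S))"

definition is_EFX2 :: "real \<Rightarrow> (nat \<Rightarrow> real) \<Rightarrow> nat set \<Rightarrow> nat set \<Rightarrow> bool" where
  "is_EFX2 a v A1 A2 \<longleftrightarrow>
     (\<forall>Ai\<in>{A1, A2}. \<forall>Aj\<in>{A1, A2}. bval v Ai \<ge> a * bar_val v Aj)"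

definition phi :: real where
  "phi = (1 + sqrt 5) / 2"

(* State of the online algorithm after the first t goods (goods 0..t-1) have arrived:
   good t goes to agent 1 iff v(A_1) + v(g_t) \<le> phi - 1, else to agent 2. *)
fun alloc :: "(nat \<Rightarrow> real) \<Rightarrow> nat \<Rightarrow> nat set \<times> nat set" where
  "alloc v 0 = ({}, {})"
| "alloc v (Suc t) =
     (let (A1, A2) = alloc v t in
      if bval v A1 + v t \<le> phi - 1 then (insert t A1, A2) else (A1, insert t A2))"

end

theory Submission
  imports Defs
begin

lemma p_facts: "phi - 1 > 0" "phi - 1 < 1" "(phi - 1) * (phi - 1) = 1 - (phi - 1)"
proof -
  have s5: "sqrt 5 * sqrt 5 = (5::real)" by simp
  have a: "sqrt 5 > (1::real)" by (simp add: real_less_rsqrt)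
  have b: "sqrt 5 < (3::real)" by (simp add: real_sqrt_less_iff real_less_lsqrt)
  show "phi - 1 > 0" using a by (simp add: phi_def)
  show "phi - 1 < 1" using b by (simp add: phi_def)
  show "(phi - 1) * (phi - 1) = 1 - (phi - 1)" using s5 by (simp add: phi_def field_simps)
qed

lemma alloc_inv:
  "(\<And>s. s < t \<Longrightarrow> v s \<ge> 0) \<Longrightarrow>
   fst (alloc v t) \<union> snd (alloc v t) = {..<t} \<and> fst (alloc v t) \<inter> snd (alloc v t) = {}
   \<and> bval v (fst (alloc v t)) \<le> phi - 1
   \<and> (\<forall>g\<in>snd (alloc v t). bval v (fst (alloc v t)) + v g > phi - 1)"
proof (induction t)
  case 0
  then show ?case using p_facts by (simp add: bval_def)
next
  case (Suc t)
  obtain A1 A2 where eq: "alloc v t = (A1, A2)" by (cases "alloc v t") auto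
  have IH: "A1 \<union> A2 = {..<t}" "A1 \<inter> A2 = {}" "bval v A1 \<le> phi - 1"
    "\<forall>g\<in>A2. bval v A1 + v g > phi - 1"
    using Suc eq by auto
  have fin: "finite A1" using IH(1) by (metis finite_Un finite_lessThan)
  have tn: "t \<notin> A1" "t \<notin> A2" using IH(1) by auto
  have vt: "v t \<ge> 0" using Suc.prems by auto
  show ?case
  proof (cases "bval v A1 + v t \<le> phi - 1")
    case True
    have bi: "bval v (insert t A1) = bval v A1 + v t"
      using fin tn by (simp add: bval_def)
    show ?thesis using True IH tn vt by (auto simp: eq bi lessThan_Suc)
  next
    case False
    show ?thesis using False IH tn by (auto simp: eq lessThan_Suc)
  qed
qed

lemma bval_nonneg: "(\<And>g. g \<in> S \<Longrightarrow> v g \<ge> 0) \<Longrightarrow> bval v S \<ge> 0"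
  unfolding bval_def by (simp add: sum_nonneg)

lemma bar_props:
  assumes fin: "finite S" and ne: "S \<noteq> {}" and nn: "\<And>g. g \<in> S \<Longrightarrow> v g \<ge> 0"
  shows "\<exists>g\<in>S. bar_val v S = bval v (S - {g})"
proof -
  have "Max ((\<lambda>g. bval v (S - {g})) ` S) \<in> (\<lambda>g. bval v (S - {g})) ` S"
    using fin ne by (intro Max_in) auto
  then show ?thesis using ne by (auto simp: bar_val_def)
qed

lemma bar_le:
  assumes fin: "finite S" and nn: "\<And>g. g \<in> S \<Longrightarrow> v g \<ge> 0"
  shows "bar_val v S \<le> bval v S" "bar_val v S \<ge> 0"
proof -
  have "bar_val v S \<le> bval v S \<and> bar_val v S \<ge> 0"
  proof (cases "S = {}")
    case True then show ?thesis by (simp add: bar_val_def bval_def)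
  next
    case False
    then obtain g where g: "g \<in> S" "bar_val v S = bval v (S - {g})"
      using bar_props[of S v, OF fin False nn] by auto
    have "bval v S = bval v (S - {g}) + v g" using fin g(1)
      by (simp add: bval_def sum.remove)
    moreover have "bval v (S - {g}) \<ge> 0" using nn by (intro bval_nonneg) auto
    ultimately show ?thesis using g nn by auto
  qed
  then show "bar_val v S \<le> bval v S" "bar_val v S \<ge> 0" by auto
qed

theorem theorem3p2:
  fixes v :: "nat \<Rightarrow> real" and T :: nat
  assumes nonneg: "\<And>t. t < T \<Longrightarrow> v t \<ge> 0"
    and normalized: "(\<Sum>t<T. v t) = 1"
  shows "is_EFX2 (phi - 1) v (fst (alloc v T)) (snd (alloc v T))"
proof -
  define p where "p = phi - 1"
  define A1 where "A1 = fst (alloc v T)"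
  define A2 where "A2 = snd (alloc v T)"
  have inv: "A1 \<union> A2 = {..<T}" "A1 \<inter> A2 = {}" "bval v A1 \<le> p"
    "\<forall>g\<in>A2. bval v A1 + v g > p"
    using alloc_inv[of T v] nonneg unfolding A1_def A2_def p_def by auto
  have pf: "p > 0" "p < 1" "p * p = 1 - p" using p_facts unfolding p_def by auto
  have fin1: "finite A1" and fin2: "finite A2" using inv(1)
    by (metis finite_Un finite_lessThan)+
  have nn1: "\<And>g. g \<in> A1 \<Longrightarrow> v g \<ge> 0" and nn2: "\<And>g. g \<in> A2 \<Longrightarrow> v g \<ge> 0"
    using inv(1) nonneg by auto
  have sum1: "bval v A1 + bval v A2 = 1"
    using normalized inv(1,2) fin1 fin2 unfolding bval_def
    by (metis sum.union_disjoint)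
  have x0: "bval v A1 \<ge> 0" using bval_nonneg nn1 by blast
  have y0: "bval v A2 \<ge> 0" using bval_nonneg nn2 by blast
  note b1 = bar_le[of A1 v, OF fin1 nn1] and b2 = bar_le[of A2 v, OF fin2 nn2]
  have c11: "bval v A1 \<ge> p * bar_val v A1"
  proof -
    have "p * bar_val v A1 \<le> 1 * bar_val v A1" using b1 pf by (intro mult_right_mono) auto
    then show ?thesis using b1 by linarith
  qed
  have c22: "bval v A2 \<ge> p * bar_val v A2"
  proof -
    have "p * bar_val v A2 \<le> 1 * bar_val v A2" using b2 pf by (intro mult_right_mono) auto
    then show ?thesis using b2 by linarith
  qed
  have c21: "bval v A2 \<ge> p * bar_val v A1"
  proof -
    have "p * bar_val v A1 \<le> p * p" using b1 inv(3) pf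
      by (intro mult_left_mono) auto
    then show ?thesis using sum1 inv(3) pf by linarith
  qed
  have c12: "bval v A1 \<ge> p * bar_val v A2"
  proof (cases "A2 = {}")
    case True then show ?thesis using x0 by (simp add: bar_val_def)
  next
    case False
    then obtain g where g: "g \<in> A2" "bar_val v A2 = bval v (A2 - {g})"
      using bar_props[of A2 v, OF fin2 False nn2] by auto
    have split: "bval v A2 = bval v (A2 - {g}) + v g" using fin2 g(1)
      by (simp add: bval_def sum.remove)
    have gp: "bval v A1 + v g > p" using inv(4) g(1) by auto
    show ?thesis
    proof (cases "A2 - {g} = {}")
      case True
      then have "bar_val v A2 = 0" using g(2) unfolding bval_def by (metis sum.empty)
      then show ?thesis using x0 by simp
    next
      case False
      then obtain h where h: "h \<in> A2" "h \<noteq> g" by auto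
      have "v h \<le> bval v (A2 - {g})" unfolding bval_def
        using h fin2 nn2 by (intro member_le_sum) auto
      moreover have "bval v A1 + v h > p" using inv(4) h(1) by auto
      ultimately have lo: "bval v A1 > p - bar_val v A2" using g by linarith
      have hi: "bar_val v A2 < 1 - p" using g split sum1 gp by linarith
      have "p * bar_val v A2 \<le> p - bar_val v A2"
      proof -
        have "(1 + p) * bar_val v A2 \<le> (1 + p) * (1 - p)"
          using hi pf by (intro mult_left_mono) auto
        also have "(1 + p) * (1 - p) = p" using pf by (simp add: algebra_simps)
        finally show ?thesis by (simp add: algebra_simps)
      qed
      then show ?thesis using lo by linarith
    qed
  qed
  show ?thesis unfolding is_EFX2_def p_def[symmetric] A1_def[symmetric] A2_def[symmetric]
    using c11 c12 c21 c22 by auto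
qed

end
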